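(* Consider any instance with $n$ agents with monotone valuations and $m=n+2$ goods. For each agent $i\in N$ there exists an EFX allocation $\mathcal{A}=(A_1,\dots,A_n)$ in which every agent receives at least one good and either (1) $|A_i|=3$; or (2) there is an agent $j\neq i$ with $|A_i|=|A_j|=2$ such that for some $k\in\{i,j\}$, agent $k$ receives a good $g\in A_k$ with $v_k(\{g\})\ge v_k(\{g'\})$ for all $g'\in A_i\cup A_j$. *)

theory Defs
  imports Complex_Main
begin

definition monotone_valuation :: "'g set \<Rightarrow> ('g set \<Rightarrow> real) \<Rightarrow> bool" where
  "monotone_valuation M v \<longleftrightarrow> (\<forall>S T. S \<subseteq> T \<longrightarrow> T \<subseteq> M \<longrightarrow> v S \<le> v T)"

definition is_allocation :: "'a set \<Rightarrow> 'g set \<Rightarrow> ('a \<Rightarrow> 'g set) \<Rightarrow> bool" where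
  "is_allocation N M A \<longleftrightarrow>
     (\<forall>i\<in>N. A i \<subseteq> M) \<and>
     (\<forall>i\<in>N. \<forall>j\<in>N. i \<noteq> j \<longrightarrow> A i \<inter> A j = {}) \<and>
     (\<Union>i\<in>N. A i) = M"

definition EFX :: "'a set \<Rightarrow> ('a \<Rightarrow> 'g set \<Rightarrow> real) \<Rightarrow> ('a \<Rightarrow> 'g set) \<Rightarrow> bool" where
  "EFX N v A \<longleftrightarrow>
     (\<forall>i\<in>N. \<forall>j\<in>N. \<forall>g\<in>A j. v i (A i) \<ge> v i (A j - {g}))"

end

theory Submission
  imports Defs "HOL-Library.FuncSet"
begin



lemma mono_le:
  assumes "monotone_valuation M f" "S \<subseteq> T" "T \<subseteq> M"
  shows "f S \<le> f T"
  using assms unfolding monotone_valuation_def by blast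

definition good_alloc :: "'a set \<Rightarrow> 'g set \<Rightarrow> ('a \<Rightarrow> 'g set \<Rightarrow> real) \<Rightarrow> 'a \<Rightarrow> ('a \<Rightarrow> 'g set) \<Rightarrow> bool" where
  "good_alloc N M v i A \<longleftrightarrow> is_allocation N M A \<and> EFX N v A \<and> (\<forall>k\<in>N. A k \<noteq> {}) \<and>
           (card (A i) = 3 \<or>
            (\<exists>j\<in>N. j \<noteq> i \<and> card (A i) = 2 \<and> card (A j) = 2 \<and>
               (\<exists>k\<in>{i, j}. \<exists>g\<in>A k. \<forall>g'\<in>A i \<union> A j. v k {g} \<ge> v k {g'})))"

lemma improve:
  fixes A :: "'a set" and G :: "'g set" and v :: "'a \<Rightarrow> 'g set \<Rightarrow> real" and y :: "'a \<Rightarrow> 'g"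
  assumes "finite A" "finite G" "inj_on y A" "y ` A \<subseteq> G"
  shows "\<exists>x. inj_on x A \<and> x ` A \<subseteq> G \<and> (\<forall>a\<in>A. v a {y a} \<le> v a {x a}) \<and>
             (\<forall>a\<in>A. \<forall>g\<in>G - x ` A. v a {g} \<le> v a {x a})"
proof -
  define X where "X = {x \<in> A \<rightarrow>\<^sub>E G. inj_on x A \<and> (\<forall>a\<in>A. v a {y a} \<le> v a {x a})}"
  define F where "F x = (\<Sum>a\<in>A. v a {x a})" for x
  have finX: "finite X" unfolding X_def using finite_PiE[of A "\<lambda>_. G"] assms(1,2) by auto
  have yX: "restrict y A \<in> X" unfolding X_def using assms(3,4) by (auto simp: inj_on_def)
  obtain x where xX: "x \<in> X" and xmax: "\<forall>x'\<in>X. F x' \<le> F x"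
  proof -
    have "Max (F ` X) \<in> F ` X" using finX yX by (intro Max_in) auto
    then obtain x where "x \<in> X" "F x = Max (F ` X)" by auto
    moreover have "\<forall>x'\<in>X. F x' \<le> Max (F ` X)" using finX by auto
    ultimately show ?thesis using that by auto
  qed
  have P: "x \<in> A \<rightarrow>\<^sub>E G" "inj_on x A" "\<forall>a\<in>A. v a {y a} \<le> v a {x a}" using xX unfolding X_def by auto
  have "\<forall>a\<in>A. \<forall>g\<in>G - x ` A. v a {g} \<le> v a {x a}"
  proof (intro ballI, rule ccontr)
    fix a g assume a: "a \<in> A" and g: "g \<in> G - x ` A" and "\<not> v a {g} \<le> v a {x a}"
    hence lt: "v a {x a} < v a {g}" by simp
    define x' where "x' = x(a := g)"
    have "x' \<in> X" unfolding X_def x'_def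
    proof (intro CollectI conjI)
      show "x(a := g) \<in> A \<rightarrow>\<^sub>E G" using P(1) a g by (auto simp: PiE_def extensional_def)
      show "inj_on (x(a := g)) A" using P(2) g by (intro inj_on_fun_updI) auto
      show "\<forall>a'\<in>A. v a' {y a'} \<le> v a' {(x(a := g)) a'}" using P(3) lt a by auto
    qed
    have "F x = v a {x a} + (\<Sum>b\<in>A - {a}. v b {x b})"
      unfolding F_def using a assms(1) by (simp add: sum.remove)
    moreover have "F x' = v a {g} + (\<Sum>b\<in>A - {a}. v b {x b})"
      unfolding F_def x'_def using a assms(1) by (simp add: sum.remove)
    ultimately have "F x < F x'" using lt by simp
    with xmax \<open>x' \<in> X\<close> show False by force
  qed
  moreover have "x ` A \<subseteq> G" using P(1) by auto
  ultimately show ?thesis using P by blast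
qed

lemma rank_exists:
  fixes f :: "'g \<Rightarrow> real"
  assumes "finite M"
  shows "\<exists>\<rho>::'g\<Rightarrow>nat. inj_on \<rho> M \<and> (\<forall>g\<in>M. \<forall>h\<in>M. f g < f h \<longrightarrow> \<rho> g < \<rho> h)"
proof -
  obtain e where e: "e ` M \<subseteq> {..<card M}" "inj_on e M"
    using card_le_inj[of M "{..<card M}"] assms by auto
  define K where "K = card M"
  define c where "c g = card {h\<in>M. f h < f g}" for g
  define \<rho> where "\<rho> g = c g * K + e g" for g
  have inj: "inj_on \<rho> M"
  proof (rule inj_onI)
    fix g h assume g: "g \<in> M" and h: "h \<in> M" and eq: "\<rho> g = \<rho> h"
    have "e g < K" "e h < K" using e g h K_def by auto
    hence "\<rho> g mod K = e g" "\<rho> h mod K = e h" unfolding \<rho>_def by auto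
    with eq have "e g = e h" by simp
    thus "g = h" using e(2) g h by (meson inj_onD)
  qed
  have mono: "\<forall>g\<in>M. \<forall>h\<in>M. f g < f h \<longrightarrow> \<rho> g < \<rho> h"
  proof (intro ballI impI)
    fix g h assume g: "g \<in> M" and h: "h \<in> M" and lt: "f g < f h"
    have "{h'\<in>M. f h' < f g} \<subset> {h'\<in>M. f h' < f h}" using lt g by auto
    hence "c g < c h" unfolding c_def using assms by (intro psubset_card_mono) auto
    hence "Suc (c g) * K \<le> c h * K" by (intro mult_le_mono1) simp
    moreover have "e g < K" using e g K_def by auto
    ultimately show "\<rho> g < \<rho> h" unfolding \<rho>_def by simp
  qed
  show ?thesis using inj mono by blast
qed




lemma rem2:
  assumes "card P = 2" "g \<in> P"
  shows "\<exists>g'. P - {g} = {g'} \<and> g' \<in> P"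
proof -
  obtain p q where "P = {p,q}" "p \<noteq> q" using assms(1) by (auto simp: card_2_iff)
  thus ?thesis using assms(2) by auto
qed

lemma pairs_good:
  assumes mono: "\<forall>k\<in>N. monotone_valuation M (v k)"
    and ij: "i \<in> N" "j \<in> N" "i \<noteq> j"
    and inj: "inj_on x (N - {i,j})" and xM: "x ` (N - {i,j}) \<subseteq> M"
    and PM: "Qi \<union> Qj = M - x ` (N - {i,j})" and disj: "Qi \<inter> Qj = {}"
    and c2: "card Qi = 2" "card Qj = 2"
    and single: "\<forall>a\<in>N-{i,j}. \<forall>g\<in>Qi \<union> Qj. v a {g} \<le> v a {x a}"
    and ci: "\<forall>g\<in>Qj. v i {g} \<le> v i Qi" and cj: "\<forall>g\<in>Qi. v j {g} \<le> v j Qj"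
    and fav: "(\<exists>g\<in>Qi. \<forall>g'\<in>Qi \<union> Qj. v i {g'} \<le> v i {g}) \<or> (\<exists>g\<in>Qj. \<forall>g'\<in>Qi \<union> Qj. v j {g'} \<le> v j {g})"
  shows "\<exists>A. good_alloc N M v i A"
proof -
  define A where "A a = (if a = i then Qi else if a = j then Qj else {x a})" for a
  have Ai: "A i = Qi" and Aj: "A j = Qj" using ij by (auto simp: A_def)
  have Aa: "a \<in> N - {i,j} \<Longrightarrow> A a = {x a}" for a by (auto simp: A_def)
  have QiM: "Qi \<subseteq> M" "Qj \<subseteq> M" using PM by auto
  have AM: "\<forall>a\<in>N. A a \<subseteq> M" using QiM xM by (auto simp: A_def)
  have alloc: "is_allocation N M A"
    unfolding is_allocation_def
  proof (intro conjI)
    show "\<forall>a\<in>N. A a \<subseteq> M" by (rule AM)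
    show "\<forall>a\<in>N. \<forall>b\<in>N. a \<noteq> b \<longrightarrow> A a \<inter> A b = {}"
    proof (intro ballI impI)
      fix a b assume a: "a \<in> N" and b: "b \<in> N" and ab: "a \<noteq> b"
      show "A a \<inter> A b = {}"
      proof -
        have nx: "\<And>c. c \<in> N - {i,j} \<Longrightarrow> x c \<notin> Qi \<and> x c \<notin> Qj" using PM by auto
        show ?thesis
        proof (cases "a = i")
          case True
          thus ?thesis using ab b disj nx Ai Aj Aa by (cases "b = j") auto
        next
          case ai: False
          show ?thesis
          proof (cases "a = j")
            case True
            thus ?thesis using ab b ai disj nx Ai Aj Aa by (cases "b = i") auto
          next
            case aj: False
            have Aa': "A a = {x a}" using Aa a ai aj by auto
            show ?thesis
            proof (cases "b = i \<or> b = j")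
              case True thus ?thesis using Aa' nx a ai aj Ai Aj by auto
            next
              case bF: False
              have aN: "a \<in> N - {i,j}" using a ai aj by blast
              have bN: "b \<in> N - {i,j}" using b bF by blast
              have "x a \<noteq> x b" using inj_onD[OF inj _ aN bN] ab by blast
              moreover have "A b = {x b}" using Aa[OF bN] .
              ultimately show ?thesis using Aa' by simp
            qed
          qed
        qed
      qed
    qed
    show "(\<Union>a\<in>N. A a) = M"
    proof
      show "(\<Union>a\<in>N. A a) \<subseteq> M" using AM by auto
      show "M \<subseteq> (\<Union>a\<in>N. A a)"
      proof
        fix g assume g: "g \<in> M"
        show "g \<in> (\<Union>a\<in>N. A a)"
        proof (cases "g \<in> x ` (N - {i,j})")
          case True
          then obtain a where "a \<in> N - {i,j}" "g = x a" by auto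
          thus ?thesis using Aa by force
        next
          case False
          hence "g \<in> Qi \<or> g \<in> Qj" using g PM by auto
          thus ?thesis using Ai Aj ij by force
        qed
      qed
    qed
  qed
  have efx: "EFX N v A"
    unfolding EFX_def
  proof (intro ballI)
    fix k l g assume k: "k \<in> N" and l: "l \<in> N" and g: "g \<in> A l"
    have monok: "monotone_valuation M (v k)" using mono k by auto
    have AkM: "A k \<subseteq> M" using AM k by auto
    show "v k (A l - {g}) \<le> v k (A k)"
    proof (cases "l \<in> {i,j}")
      case False
      hence e: "A l - {g} = {}" using g Aa l by auto
      have "v k {} \<le> v k (A k)" by (rule mono_le[OF monok _ AkM]) simp
      thus ?thesis by (simp only: e)
    next
      case True
      hence cl: "card (A l) = 2" using Ai Aj c2 by auto
      obtain g' where g': "A l - {g} = {g'}" "g' \<in> A l" using rem2[OF cl g] by blast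
      have "v k {g'} \<le> v k (A k)"
      proof (cases "k = l")
        case True thus ?thesis using g' mono_le[OF monok _ AkM] by auto
      next
        case kl: False
        show ?thesis
        proof (cases "k \<in> {i,j}")
          case True
          hence "(k = i \<and> l = j) \<or> (k = j \<and> l = i)" using kl \<open>l \<in> {i,j}\<close> by blast
          thus ?thesis
          proof
            assume "k = i \<and> l = j"
            thus ?thesis using ci g'(2) Ai Aj by simp
          next
            assume "k = j \<and> l = i"
            thus ?thesis using cj g'(2) Ai Aj by simp
          qed
        next
          case False
          hence kN: "k \<in> N - {i,j}" using k by blast
          have "g' \<in> Qi \<union> Qj" using g'(2) \<open>l \<in> {i,j}\<close> Ai Aj by blast
          hence "v k {g'} \<le> v k {x k}" using single kN by blast
          thus ?thesis using Aa[OF kN] by simp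
        qed
      qed
      thus ?thesis using g' by simp
    qed
  qed
  have ne: "\<forall>k\<in>N. A k \<noteq> {}"
  proof
    fix k assume "k \<in> N"
    show "A k \<noteq> {}"
    proof (cases "k = i \<or> k = j")
      case True thus ?thesis using c2 Ai Aj by auto
    next
      case False thus ?thesis using Aa \<open>k \<in> N\<close> by auto
    qed
  qed
  have "\<exists>j'\<in>N. j' \<noteq> i \<and> card (A i) = 2 \<and> card (A j') = 2 \<and>
               (\<exists>k\<in>{i, j'}. \<exists>g\<in>A k. \<forall>g'\<in>A i \<union> A j'. v k {g} \<ge> v k {g'})"
    using ij c2 fav Ai Aj by (intro bexI[of _ j]) auto
  hence "good_alloc N M v i A" unfolding good_alloc_def by (intro conjI alloc efx ne disjI2)
  thus ?thesis by blast
qed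

lemma triple_good:
  assumes mono: "\<forall>k\<in>N. monotone_valuation M (v k)"
    and i: "i \<in> N"
    and inj: "inj_on x (N - {i})" and xM: "x ` (N - {i}) \<subseteq> M"
    and TM: "T = M - x ` (N - {i})" and c3: "card T = 3"
    and single: "\<forall>a\<in>N-{i}. \<forall>g\<in>T. v a (T - {g}) \<le> v a {x a}"
  shows "\<exists>A. good_alloc N M v i A"
proof -
  define A where "A a = (if a = i then T else {x a})" for a
  have Ai: "A i = T" by (auto simp: A_def)
  have Aa: "a \<in> N - {i} \<Longrightarrow> A a = {x a}" for a by (auto simp: A_def)
  have AM: "\<forall>a\<in>N. A a \<subseteq> M" using TM xM by (auto simp: A_def)
  have alloc: "is_allocation N M A"
    unfolding is_allocation_def
  proof (intro conjI)
    show "\<forall>a\<in>N. A a \<subseteq> M" by (rule AM)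
    show "\<forall>a\<in>N. \<forall>b\<in>N. a \<noteq> b \<longrightarrow> A a \<inter> A b = {}"
    proof (intro ballI impI)
      fix a b assume a: "a \<in> N" and b: "b \<in> N" and ab: "a \<noteq> b"
      show "A a \<inter> A b = {}"
      proof (cases "a = i")
        case True
        hence bN: "b \<in> N - {i}" using b ab by blast
        thus ?thesis using True Ai Aa[OF bN] TM by auto
      next
        case False
        hence aN: "a \<in> N - {i}" using a by blast
        show ?thesis
        proof (cases "b = i")
          case True thus ?thesis using Ai Aa[OF aN] TM aN by auto
        next
          case False
          hence bN: "b \<in> N - {i}" using b by blast
          have "x a \<noteq> x b" using inj_onD[OF inj _ aN bN] ab by blast
          thus ?thesis using Aa[OF aN] Aa[OF bN] by simp
        qed
      qed
    qed
    show "(\<Union>a\<in>N. A a) = M"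
    proof
      show "(\<Union>a\<in>N. A a) \<subseteq> M" using AM by auto
      show "M \<subseteq> (\<Union>a\<in>N. A a)"
      proof
        fix g assume g: "g \<in> M"
        show "g \<in> (\<Union>a\<in>N. A a)"
        proof (cases "g \<in> x ` (N - {i})")
          case True
          then obtain a where "a \<in> N - {i}" "g = x a" by auto
          thus ?thesis using Aa by force
        next
          case False
          thus ?thesis using g TM Ai i by force
        qed
      qed
    qed
  qed
  have efx: "EFX N v A"
    unfolding EFX_def
  proof (intro ballI)
    fix k l g assume k: "k \<in> N" and l: "l \<in> N" and g: "g \<in> A l"
    have monok: "monotone_valuation M (v k)" using mono k by auto
    have AkM: "A k \<subseteq> M" using AM k by auto
    show "v k (A l - {g}) \<le> v k (A k)"
    proof (cases "l = i")
      case False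
      hence e: "A l - {g} = {}" using g Aa l by auto
      have "v k {} \<le> v k (A k)" by (rule mono_le[OF monok _ AkM]) simp
      thus ?thesis by (simp only: e)
    next
      case True
      show ?thesis
      proof (cases "k = i")
        case True thus ?thesis using \<open>l = i\<close> mono_le[OF monok _ AkM] by auto
      next
        case False thus ?thesis using single k g \<open>l = i\<close> Ai Aa by auto
      qed
    qed
  qed
  have ne: "\<forall>k\<in>N. A k \<noteq> {}"
  proof
    fix k assume "k \<in> N"
    show "A k \<noteq> {}"
    proof (cases "k = i")
      case True thus ?thesis using c3 Ai by auto
    next
      case False thus ?thesis using Aa \<open>k \<in> N\<close> by auto
    qed
  qed
  have "good_alloc N M v i A" unfolding good_alloc_def using c3 Ai by (intro conjI alloc efx ne disjI1) simp
  thus ?thesis by blast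
qed




locale setting =
  fixes N :: "'a set" and M :: "'g set" and v :: "'a \<Rightarrow> 'g set \<Rightarrow> real" and i :: 'a and \<rho> :: "'g \<Rightarrow> nat"
  assumes finN: "finite N" and finM: "finite M" and cardM: "card M = card N + 2"
    and mono: "\<forall>k\<in>N. monotone_valuation M (v k)" and iN: "i \<in> N" and n2: "2 \<le> card N"
    and rinj: "inj_on \<rho> M" and rmono: "\<forall>g\<in>M. \<forall>h\<in>M. v i {g} < v i {h} \<longrightarrow> \<rho> g < \<rho> h"
begin

abbreviation "Oth \<equiv> N - {i}"

definition valid :: "'a \<Rightarrow> ('a \<Rightarrow> 'g) \<Rightarrow> bool" where
  "valid c x \<longleftrightarrow> c \<in> Oth \<and> inj_on x (Oth - {c}) \<and> x ` (Oth - {c}) \<subseteq> M \<and>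
     (\<forall>a\<in>Oth - {c}. \<forall>g\<in>M - x ` (Oth - {c}). v a {g} \<le> v a {x a})"

definition Rof :: "'a \<Rightarrow> ('a \<Rightarrow> 'g) \<Rightarrow> 'g set" where
  "Rof c x = M - x ` (Oth - {c})"

definition topr :: "'g set \<Rightarrow> 'g" where
  "topr R = (SOME g. g \<in> R \<and> (\<forall>h\<in>R. \<rho> h \<le> \<rho> g))"

definition Tof :: "'a \<Rightarrow> ('a \<Rightarrow> 'g) \<Rightarrow> 'g set" where
  "Tof c x = Rof c x - {topr (Rof c x)}"

definition Kof :: "'a \<Rightarrow> ('a \<Rightarrow> 'g) \<Rightarrow> 'a set" where
  "Kof c x = {a \<in> Oth - {c}. \<forall>g\<in>Tof c x. v a (Tof c x - {g}) \<le> v a {x a}}"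

definition meas :: "'a \<Rightarrow> ('a \<Rightarrow> 'g) \<Rightarrow> nat" where
  "meas c x = (\<Sum>g\<in>Tof c x. \<rho> g) * card N + (card N - card (Kof c x))"

lemma card_Oth: "card Oth = card N - 1"
  using finN iN by simp

lemma R_props:
  assumes "valid c x"
  shows "card (Rof c x) = 4" "Rof c x \<subseteq> M" "finite (Rof c x)"
proof -
  have c: "c \<in> Oth" and inj: "inj_on x (Oth - {c})" and xM: "x ` (Oth - {c}) \<subseteq> M"
    using assms unfolding valid_def by auto
  have "card (Oth - {c}) = card N - 2" using c card_Oth finN by simp
  hence "card (x ` (Oth - {c})) = card N - 2" using card_image[OF inj] by simp
  hence "card (M - x ` (Oth - {c})) = card M - (card N - 2)"
    using card_Diff_subset[OF finite_subset[OF xM finM] xM] by simp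
  thus "card (Rof c x) = 4" unfolding Rof_def using cardM n2 by simp
  show "Rof c x \<subseteq> M" unfolding Rof_def by auto
  thus "finite (Rof c x)" using finM finite_subset by blast
qed

lemma topr_props:
  assumes "finite R" "R \<noteq> {}"
  shows "topr R \<in> R" "\<forall>h\<in>R. \<rho> h \<le> \<rho> (topr R)"
proof -
  have "Max (\<rho> ` R) \<in> \<rho> ` R" using assms by simp
  then obtain g where g: "g \<in> R" "\<rho> g = Max (\<rho> ` R)" by auto
  have "\<forall>h\<in>R. \<rho> h \<le> \<rho> g" using g assms by simp
  hence ex: "\<exists>g. g \<in> R \<and> (\<forall>h\<in>R. \<rho> h \<le> \<rho> g)" using g by blast
  show "topr R \<in> R" "\<forall>h\<in>R. \<rho> h \<le> \<rho> (topr R)"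
    using someI_ex[OF ex] unfolding topr_def by auto
qed

lemma topr_vi:
  assumes "finite R" "R \<noteq> {}" "R \<subseteq> M"
  shows "\<forall>h\<in>R. v i {h} \<le> v i {topr R}"
proof
  fix h assume h: "h \<in> R"
  have t: "topr R \<in> R" "\<rho> h \<le> \<rho> (topr R)" using topr_props[OF assms(1,2)] h by auto
  show "v i {h} \<le> v i {topr R}"
  proof (rule ccontr)
    assume "\<not> v i {h} \<le> v i {topr R}"
    hence "v i {topr R} < v i {h}" by simp
    hence "\<rho> (topr R) < \<rho> h" using rmono t(1) h assms(3) by blast
    thus False using t(2) by simp
  qed
qed

lemma K_card: "card (Kof c x) \<le> card N - 1"
proof -
  have "Kof c x \<subseteq> Oth" unfolding Kof_def by auto
  hence "card (Kof c x) \<le> card Oth" using finN by (intro card_mono) auto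
  thus ?thesis using card_Oth by simp
qed

lemma exists_valid: "\<exists>c x. valid c x"
proof -
  have "card Oth \<ge> 1" using card_Oth n2 by simp
  hence "Oth \<noteq> {}" by (metis card.empty not_one_le_zero)
  then obtain c where c: "c \<in> Oth" by auto
  have fO: "finite (Oth - {c})" using finN by simp
  have "card (Oth - {c}) \<le> card M" using c card_Oth cardM finN by simp
  then obtain y where y: "y ` (Oth - {c}) \<subseteq> M" "inj_on y (Oth - {c})"
    using card_le_inj[OF fO finM] by auto
  obtain x where x: "inj_on x (Oth - {c})" "x ` (Oth - {c}) \<subseteq> M"
     "\<forall>a\<in>Oth - {c}. \<forall>g\<in>M - x ` (Oth - {c}). v a {g} \<le> v a {x a}"
    using improve[OF fO finM y(2) y(1), of v] by blast
  have "valid c x" unfolding valid_def using c x by blast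
  thus ?thesis by blast
qed

end



context setting begin

lemma basic:
  assumes val: "valid c x"
  defines "R \<equiv> Rof c x" and "r \<equiv> topr (Rof c x)" and "S \<equiv> Tof c x"
  shows "card R = 4" "R \<subseteq> M" "finite R" "r \<in> R" "\<forall>h\<in>R. \<rho> h \<le> \<rho> r"
    "\<forall>h\<in>R. v i {h} \<le> v i {r}" "S = R - {r}" "card S = 3" "S \<subseteq> R" "r \<notin> S"
    "c \<in> Oth" "inj_on x (Oth - {c})" "x ` (Oth - {c}) \<subseteq> M"
    "\<forall>a\<in>Oth - {c}. \<forall>g\<in>R. v a {g} \<le> v a {x a}"
    "R = M - x ` (Oth - {c})"
proof -
  show cR: "card R = 4" "R \<subseteq> M" "finite R" using R_props[OF val] R_def by auto
  hence ne: "R \<noteq> {}" by auto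
  show rR: "r \<in> R" "\<forall>h\<in>R. \<rho> h \<le> \<rho> r" using topr_props[OF \<open>finite R\<close> ne] R_def r_def by auto
  show "\<forall>h\<in>R. v i {h} \<le> v i {r}" using topr_vi[OF \<open>finite R\<close> ne \<open>R \<subseteq> M\<close>] R_def r_def by auto
  show SR: "S = R - {r}" unfolding S_def Tof_def R_def r_def ..
  show "card S = 3" using SR cR rR by simp
  show "S \<subseteq> R" "r \<notin> S" using SR by auto
  show "c \<in> Oth" "inj_on x (Oth - {c})" "x ` (Oth - {c}) \<subseteq> M" using val unfolding valid_def by auto
  show "\<forall>a\<in>Oth - {c}. \<forall>g\<in>R. v a {g} \<le> v a {x a}" using val unfolding valid_def R_def Rof_def by blast
  show "R = M - x ` (Oth - {c})" unfolding R_def Rof_def ..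
qed

lemma no_bad:
  assumes val: "valid c x" and minimal: "\<forall>c' x'. valid c' x' \<longrightarrow> meas c x \<le> meas c' x'"
  defines "R \<equiv> Rof c x" and "r \<equiv> topr (Rof c x)" and "S \<equiv> Tof c x"
  assumes cmax: "\<forall>h\<in>R. v c {h} \<le> v c {r}"
    and B3c: "\<forall>g\<in>S. v c (S - {g}) < v c {r}"
    and b: "b \<in> Oth - {c}" and g0: "g0 \<in> S" and bad: "v b {x b} < v b (S - {g0})"
  shows False
proof -
  note B = basic[OF val, folded R_def r_def S_def]
  define y where "y = x(c := r)"
  have fA: "finite (Oth - {b})" using finN by simp
  have fG: "finite (M - S)" using finM by simp
  have cb: "c \<noteq> b" using b by blast
  have cOb: "c \<in> Oth - {b}" using B(11) cb by blast
  have eqA: "Oth - {b} = insert c (Oth - {b} - {c})" using cOb by blast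
  have yx: "\<forall>a\<in>Oth - {b} - {c}. y a = x a" unfolding y_def by auto
  have rnot: "r \<notin> x ` (Oth - {c})" using B(4) B(15) by blast
  have injy: "inj_on y (Oth - {b})"
  proof -
    have ix: "inj_on x (Oth - {b} - {c})" by (rule inj_on_subset[OF B(12)]) auto
    have "inj_on y (Oth - {b} - {c}) = inj_on x (Oth - {b} - {c})"
      by (rule inj_on_cong) (use yx in auto)
    hence i1: "inj_on y (Oth - {b} - {c})" using ix by simp
    have "y c \<notin> y ` (Oth - {b} - {c})"
    proof
      assume "y c \<in> y ` (Oth - {b} - {c})"
      then obtain a where a: "a \<in> Oth - {b} - {c}" "y c = y a" by blast
      hence "r = x a" using yx unfolding y_def by auto
      thus False using rnot a(1) by blast
    qed
    hence "inj_on y (insert c (Oth - {b} - {c}))" using i1 inj_on_insert[of y c "Oth - {b} - {c}"] by simp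
    thus ?thesis using eqA by metis
  qed
  have yG: "y ` (Oth - {b}) \<subseteq> M - S"
  proof
    fix g assume "g \<in> y ` (Oth - {b})"
    then obtain a where a: "a \<in> Oth - {b}" "g = y a" by blast
    show "g \<in> M - S"
    proof (cases "a = c")
      case True thus ?thesis using a B(4) B(2) B(10) unfolding y_def by auto
    next
      case False
      hence "g = x a" "a \<in> Oth - {c}" using a unfolding y_def by auto
      thus ?thesis using B(13) B(15) B(9) by blast
    qed
  qed
  obtain x' where x': "inj_on x' (Oth - {b})" "x' ` (Oth - {b}) \<subseteq> M - S"
    "\<forall>a\<in>Oth - {b}. v a {y a} \<le> v a {x' a}"
    "\<forall>a\<in>Oth - {b}. \<forall>g\<in>(M - S) - x' ` (Oth - {b}). v a {g} \<le> v a {x' a}"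
    using improve[OF fA fG injy yG, of v] by blast
  have ysmall: "\<forall>a\<in>Oth - {b}. \<forall>g\<in>S. v a {g} \<le> v a {y a}"
  proof (intro ballI)
    fix a g assume a: "a \<in> Oth - {b}" and g: "g \<in> S"
    show "v a {g} \<le> v a {y a}"
    proof (cases "a = c")
      case True thus ?thesis using cmax g B(9) unfolding y_def by auto
    next
      case False
      hence "a \<in> Oth - {c}" "y a = x a" using a unfolding y_def by auto
      thus ?thesis using B(14) g B(9) by auto
    qed
  qed
  have val': "valid b x'"
    unfolding valid_def
  proof (intro conjI)
    show "b \<in> Oth" using b by blast
    show "inj_on x' (Oth - {b})" by (rule x'(1))
    show "x' ` (Oth - {b}) \<subseteq> M" using x'(2) by blast
    show "\<forall>a\<in>Oth - {b}. \<forall>g\<in>M - x' ` (Oth - {b}). v a {g} \<le> v a {x' a}"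
    proof (intro ballI)
      fix a g assume a: "a \<in> Oth - {b}" and g: "g \<in> M - x' ` (Oth - {b})"
      show "v a {g} \<le> v a {x' a}"
      proof (cases "g \<in> S")
        case True
        thus ?thesis using ysmall x'(3) a by force
      next
        case False
        thus ?thesis using x'(4) a g by blast
      qed
    qed
  qed
  note B' = basic[OF val']
  define R' where "R' = Rof b x'"
  define t where "t = topr (Rof b x')"
  have SR': "S \<subseteq> R'" unfolding R'_def Rof_def using x'(2) B(2) B(9) by blast
  have le: "meas c x \<le> meas b x'" using minimal val' by blast
  have kc: "card (Kof c x) \<le> card N - 1" "card (Kof b x') \<le> card N - 1" using K_card by auto
  have nN: "card N \<ge> 2" by (rule n2)
  show False
  proof (cases "t \<in> S")
    case False
    have "S \<subseteq> Tof b x'" unfolding Tof_def using SR' False R'_def t_def by blast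
    moreover have "card (Tof b x') = 3" using B'(8) by simp
    ultimately have TS: "Tof b x' = S" using B(8) B'(3) B'(9)
      by (metis card_subset_eq finite_subset)
    have KK: "insert c (Kof c x) \<subseteq> Kof b x'"
    proof
      fix a assume "a \<in> insert c (Kof c x)"
      thus "a \<in> Kof b x'"
      proof
        assume ac: "a = c"
        have "\<forall>g\<in>S. v c (S - {g}) \<le> v c {x' c}"
        proof
          fix g assume "g \<in> S"
          have "v c (S - {g}) < v c {r}" using B3c \<open>g \<in> S\<close> by blast
          also have "v c {r} \<le> v c {x' c}" using x'(3) cOb unfolding y_def by force
          finally show "v c (S - {g}) \<le> v c {x' c}" by simp
        qed
        thus ?thesis unfolding Kof_def TS using ac cOb by blast
      next
        assume aK: "a \<in> Kof c x"
        hence aO: "a \<in> Oth - {c}" and ag: "\<forall>g\<in>S. v a (S - {g}) \<le> v a {x a}"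
          unfolding Kof_def S_def by auto
        have ab: "a \<noteq> b" using ag g0 bad by force
        have "v a {x a} \<le> v a {x' a}" using x'(3) aO ab unfolding y_def by force
        hence "\<forall>g\<in>S. v a (S - {g}) \<le> v a {x' a}" using ag by force
        thus ?thesis unfolding Kof_def TS using aO ab by blast
      qed
    qed
    have cnot: "c \<notin> Kof c x" unfolding Kof_def by blast
    have fK: "finite (Kof b x')" unfolding Kof_def using finN by simp
    have "card (insert c (Kof c x)) \<le> card (Kof b x')" using KK fK by (rule card_mono[rotated])
    moreover have "finite (Kof c x)" unfolding Kof_def using finN by simp
    ultimately have "card (Kof c x) < card (Kof b x')" using cnot by simp
    moreover have "(\<Sum>g\<in>Tof b x'. \<rho> g) = (\<Sum>g\<in>Tof c x. \<rho> g)" using TS S_def by simp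
    ultimately have "meas b x' < meas c x" unfolding meas_def using kc by simp
    thus False using le by simp
  next
    case True
    have cardR': "card R' = 4" using B'(1) R'_def by simp
    have fR': "finite R'" using B'(3) R'_def by simp
    have fS: "finite S" using B(3) B(9) finite_subset by blast
    have "card S < card R'" using B(8) cardR' by simp
    have "\<not> R' \<subseteq> S"
    proof
      assume "R' \<subseteq> S"
      hence "card R' \<le> card S" using card_mono fS by blast
      thus False using \<open>card S < card R'\<close> by simp
    qed
    then obtain z where z: "z \<in> R'" "z \<notin> S" by blast
    have "insert z S \<subseteq> R'" using z SR' by blast
    moreover have "card (insert z S) = 4" using z B(8) B(3) B(9) finite_subset by fastforce
    ultimately have R'eq: "R' = insert z S" using fR' cardR' by (metis card_subset_eq)
    have T'eq: "Tof b x' = insert z (S - {t})"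
      unfolding Tof_def using R'eq R'_def t_def True z(2) by auto
    have zt: "z \<noteq> t" using z True by blast
    have tR': "t \<in> R'" using True SR' by blast
    have "\<rho> z \<le> \<rho> t" using B'(5) z(1) R'_def t_def by blast
    moreover have "\<rho> z \<noteq> \<rho> t" using rinj zt z(1) tR' B'(2) R'_def
      by (metis inj_onD subsetD)
    ultimately have zlt: "\<rho> z < \<rho> t" by simp
    have s1: "(\<Sum>g\<in>Tof b x'. \<rho> g) = \<rho> z + (\<Sum>g\<in>S - {t}. \<rho> g)"
      unfolding T'eq using fS z(2) by simp
    have s2: "(\<Sum>g\<in>Tof c x. \<rho> g) = \<rho> t + (\<Sum>g\<in>S - {t}. \<rho> g)"
      unfolding S_def[symmetric] using fS True by (simp add: sum.remove)
    have lt: "(\<Sum>g\<in>Tof b x'. \<rho> g) < (\<Sum>g\<in>Tof c x. \<rho> g)" using s1 s2 zlt by simp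
    define s' where "s' = (\<Sum>g\<in>Tof b x'. \<rho> g)"
    define s where "s = (\<Sum>g\<in>Tof c x. \<rho> g)"
    have "Suc s' * card N \<le> s * card N" using lt unfolding s_def s'_def by (intro mult_le_mono1) simp
    hence "meas b x' < meas c x" unfolding meas_def s_def[symmetric] s'_def[symmetric] using kc nN by simp
    thus False using le by simp
  qed
qed

end



context setting begin

lemma main:
  assumes val: "valid c x" and minimal: "\<forall>c' x'. valid c' x' \<longrightarrow> meas c x \<le> meas c' x'"
  shows "\<exists>A. good_alloc N M v i A"
proof -
  define R where "R = Rof c x"
  define r where "r = topr (Rof c x)"
  define S where "S = Tof c x"
  note B = basic[OF val, folded R_def r_def S_def]
  have cN: "c \<in> N" and ci: "i \<noteq> c" using B(11) by auto
  have Nic: "N - {i, c} = Oth - {c}" by auto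
  have monoi: "monotone_valuation M (v i)" and monoc: "monotone_valuation M (v c)"
    using mono iN cN by auto
  have pairs: "\<exists>A. good_alloc N M v i A"
    if Q: "Qi \<union> Qc = R" "Qi \<inter> Qc = {}" "card Qi = 2" "card Qc = 2"
      and ci': "\<forall>g\<in>Qc. v i {g} \<le> v i Qi" and cc: "\<forall>g\<in>Qi. v c {g} \<le> v c Qc"
      and fav: "(\<exists>g\<in>Qi. \<forall>g'\<in>Qi \<union> Qc. v i {g'} \<le> v i {g}) \<or> (\<exists>g\<in>Qc. \<forall>g'\<in>Qi \<union> Qc. v c {g'} \<le> v c {g})"
    for Qi Qc
  proof -
    have inj': "inj_on x (N - {i,c})" using B(12) Nic by simp
    have xM': "x ` (N - {i,c}) \<subseteq> M" using B(13) Nic by simp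
    have PM: "Qi \<union> Qc = M - x ` (N - {i,c})" using Q(1) B(15) Nic by simp
    have single: "\<forall>a\<in>N-{i,c}. \<forall>g\<in>Qi \<union> Qc. v a {g} \<le> v a {x a}" using B(14) Nic Q(1) by simp
    show ?thesis using pairs_good[OF mono iN cN ci inj' xM' PM Q(2) Q(3) Q(4) single ci' cc fav] .
  qed
  have RM: "R \<subseteq> M" by (rule B(2))
  show ?thesis
  proof (cases "\<exists>r2\<in>R. r2 \<noteq> r \<and> (\<forall>h\<in>R. v c {h} \<le> v c {r2})")
    case True
    then obtain r2 where r2: "r2 \<in> R" "r2 \<noteq> r" "\<forall>h\<in>R. v c {h} \<le> v c {r2}" by blast
    have "card (R - {r, r2}) = 2" using B(1) B(3) B(4) r2 by (simp add: card_Diff_subset)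
    hence "R - {r, r2} \<noteq> {}" by (metis card.empty zero_neq_numeral)
    then obtain y where y: "y \<in> R" "y \<noteq> r" "y \<noteq> r2" by blast
    define Qi where "Qi = {r, y}"
    define Qc where "Qc = R - {r, y}"
    have QiR: "Qi \<subseteq> R" using y B(4) Qi_def by auto
    have c1: "Qi \<union> Qc = R" "Qi \<inter> Qc = {}" using QiR Qc_def Qi_def by auto
    have c2: "card Qi = 2" using y Qi_def by simp
    have c3: "card Qc = 2" using B(1) B(3) QiR c2 Qc_def Qi_def by (simp add: card_Diff_subset)
    have r2Q: "r2 \<in> Qc" using r2 y Qc_def by auto
    have QcR: "Qc \<subseteq> R" using Qc_def by auto
    have ci': "\<forall>g\<in>Qc. v i {g} \<le> v i Qi"
    proof
      fix g assume "g \<in> Qc"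
      hence "v i {g} \<le> v i {r}" using B(6) QcR by blast
      also have "v i {r} \<le> v i Qi" by (rule mono_le[OF monoi]) (use QiR RM Qi_def in auto)
      finally show "v i {g} \<le> v i Qi" .
    qed
    have cc: "\<forall>g\<in>Qi. v c {g} \<le> v c Qc"
    proof
      fix g assume "g \<in> Qi"
      hence "v c {g} \<le> v c {r2}" using r2(3) QiR by blast
      also have "v c {r2} \<le> v c Qc" by (rule mono_le[OF monoc]) (use QcR RM r2Q in auto)
      finally show "v c {g} \<le> v c Qc" .
    qed
    have fav: "\<exists>g\<in>Qi. \<forall>g'\<in>Qi \<union> Qc. v i {g'} \<le> v i {g}" using B(6) c1(1) Qi_def by auto
    show ?thesis using pairs[OF c1 c2 c3 ci' cc] fav by blast
  next
    case False
    have fR: "finite R" and neR: "R \<noteq> {}" using B(3) B(4) by auto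
    have "Max ((\<lambda>h. v c {h}) ` R) \<in> (\<lambda>h. v c {h}) ` R" using fR neR by simp
    then obtain m where m: "m \<in> R" "v c {m} = Max ((\<lambda>h. v c {h}) ` R)" by auto
    have mmax: "\<forall>h\<in>R. v c {h} \<le> v c {m}" using m fR by simp
    hence "m = r" using False m(1) by blast
    hence cmax: "\<forall>h\<in>R. v c {h} \<le> v c {r}" using mmax by simp
    show ?thesis
    proof (cases "\<exists>g\<in>S. v c {r} \<le> v c (S - {g})")
      case True
      then obtain g where g: "g \<in> S" "v c {r} \<le> v c (S - {g})" by blast
      define Qi where "Qi = {r, g}"
      define Qc where "Qc = S - {g}"
      have gr: "g \<noteq> r" using g B(10) by auto
      have QiR: "Qi \<subseteq> R" using g B(4) B(9) Qi_def by auto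
      have QcR: "Qc \<subseteq> R" using B(9) Qc_def by auto
      have c1: "Qi \<union> Qc = R" "Qi \<inter> Qc = {}" using B(7) g(1) B(4) Qi_def Qc_def by auto
      have c2: "card Qi = 2" using gr Qi_def by simp
      have c3: "card Qc = 2" using B(8) g(1) Qc_def by simp
      have ci': "\<forall>h\<in>Qc. v i {h} \<le> v i Qi"
      proof
        fix h assume "h \<in> Qc"
        hence "v i {h} \<le> v i {r}" using B(6) QcR by blast
        also have "v i {r} \<le> v i Qi" by (rule mono_le[OF monoi]) (use QiR RM Qi_def in auto)
        finally show "v i {h} \<le> v i Qi" .
      qed
      have cc: "\<forall>h\<in>Qi. v c {h} \<le> v c Qc"
      proof
        fix h assume "h \<in> Qi"
        hence "v c {h} \<le> v c {r}" using cmax QiR by blast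
        also have "v c {r} \<le> v c Qc" using g(2) Qc_def by simp
        finally show "v c {h} \<le> v c Qc" .
      qed
      have fav: "\<exists>g\<in>Qi. \<forall>g'\<in>Qi \<union> Qc. v i {g'} \<le> v i {g}" using B(6) c1(1) Qi_def by auto
      show ?thesis using pairs[OF c1 c2 c3 ci' cc] fav by blast
    next
      case nB1: False
      show ?thesis
      proof (cases "\<exists>g\<in>S. v i {r} \<le> v i (S - {g})")
        case True
        then obtain g where g: "g \<in> S" "v i {r} \<le> v i (S - {g})" by blast
        define Qc where "Qc = {r, g}"
        define Qi where "Qi = S - {g}"
        have gr: "g \<noteq> r" using g B(10) by auto
        have QcR: "Qc \<subseteq> R" using g B(4) B(9) Qc_def by auto
        have QiR: "Qi \<subseteq> R" using B(9) Qi_def by auto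
        have c1: "Qi \<union> Qc = R" "Qi \<inter> Qc = {}" using B(7) g(1) B(4) Qi_def Qc_def by auto
        have c3: "card Qc = 2" using gr Qc_def by simp
        have c2: "card Qi = 2" using B(8) g(1) Qi_def by simp
        have ci': "\<forall>h\<in>Qc. v i {h} \<le> v i Qi"
        proof
          fix h assume "h \<in> Qc"
          hence "v i {h} \<le> v i {r}" using B(6) QcR by blast
          also have "v i {r} \<le> v i Qi" using g(2) Qi_def by simp
          finally show "v i {h} \<le> v i Qi" .
        qed
        have cc: "\<forall>h\<in>Qi. v c {h} \<le> v c Qc"
        proof
          fix h assume "h \<in> Qi"
          hence "v c {h} \<le> v c {r}" using cmax QiR by blast
          also have "v c {r} \<le> v c Qc" by (rule mono_le[OF monoc]) (use QcR RM Qc_def in auto)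
          finally show "v c {h} \<le> v c Qc" .
        qed
        have fav: "\<exists>g\<in>Qc. \<forall>g'\<in>Qi \<union> Qc. v c {g'} \<le> v c {g}" using cmax c1(1) Qc_def by auto
        show ?thesis using pairs[OF c1 c2 c3 ci' cc] fav by blast
      next
        case nB2: False
        have B3c: "\<forall>g\<in>S. v c (S - {g}) < v c {r}" using nB1 by auto
        show ?thesis
        proof (cases "\<exists>b\<in>Oth - {c}. \<exists>g0\<in>S. v b {x b} < v b (S - {g0})")
          case True
          then obtain b g0 where "b \<in> Oth - {c}" "g0 \<in> S" "v b {x b} < v b (S - {g0})" by blast
          hence False using no_bad[OF val minimal] cmax B3c unfolding R_def r_def S_def by blast
          thus ?thesis ..
        next
          case nbad: False
          define y where "y = x(c := r)"
          have eqN: "N - {i} = insert c (Oth - {c})" using B(11) by auto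
          have yx: "\<forall>a\<in>Oth - {c}. y a = x a" unfolding y_def by auto
          have "inj_on y (Oth - {c}) = inj_on x (Oth - {c})"
            by (rule inj_on_cong) (use yx in auto)
          hence i1: "inj_on y (Oth - {c})" using B(12) by simp
          have "y c \<notin> y ` (Oth - {c})"
          proof
            assume "y c \<in> y ` (Oth - {c})"
            then obtain a where a: "a \<in> Oth - {c}" "y c = y a" by blast
            hence "r = x a" using yx unfolding y_def by auto
            thus False using B(4) B(15) a(1) by auto
          qed
          hence "inj_on y (insert c (Oth - {c}))" using i1 inj_on_insert[of y c "Oth - {c}"] by simp
          hence injy: "inj_on y (N - {i})" using eqN by metis
          have imy: "y ` (N - {i}) = insert r (x ` (Oth - {c}))"
          proof -
            have "y ` (N - {i}) = y ` (insert c (Oth - {c}))" using eqN by metis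
            also have "\<dots> = insert (y c) (y ` (Oth - {c}))" by (rule image_insert)
            also have "y ` (Oth - {c}) = x ` (Oth - {c})" using yx by (intro image_cong) auto
            finally show ?thesis unfolding y_def by simp
          qed
          have yM: "y ` (N - {i}) \<subseteq> M" using imy B(13) B(4) RM by auto
          have TM: "S = M - y ` (N - {i})" using imy B(7) B(15) by auto
          have single: "\<forall>a\<in>N-{i}. \<forall>g\<in>S. v a (S - {g}) \<le> v a {y a}"
          proof (intro ballI)
            fix a g assume a: "a \<in> N - {i}" and g: "g \<in> S"
            show "v a (S - {g}) \<le> v a {y a}"
            proof (cases "a = c")
              case True thus ?thesis using B3c g unfolding y_def by (simp add: less_imp_le)
            next
              case False
              hence "a \<in> Oth - {c}" "y a = x a" using a yx by auto
              thus ?thesis using nbad g by force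
            qed
          qed
          show ?thesis using triple_good[OF mono iN injy yM TM B(8) single] .
        qed
      qed
    qed
  qed
qed

end

theorem lemma7:
  fixes N :: "'a set" and M :: "'g set" and v :: "'a \<Rightarrow> 'g set \<Rightarrow> real" and i :: 'a
  assumes "finite N" and "finite M"
    and "card M = card N + 2"
    and "\<forall>k\<in>N. monotone_valuation M (v k)"
    and "i \<in> N"
  shows "\<exists>A. is_allocation N M A \<and> EFX N v A \<and> (\<forall>k\<in>N. A k \<noteq> {}) \<and>
           (card (A i) = 3 \<or>
            (\<exists>j\<in>N. j \<noteq> i \<and> card (A i) = 2 \<and> card (A j) = 2 \<and>
               (\<exists>k\<in>{i, j}. \<exists>g\<in>A k. \<forall>g'\<in>A i \<union> A j. v k {g} \<ge> v k {g'})))"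
proof -
  have "\<exists>A. good_alloc N M v i A"
  proof (cases "card N \<ge> 2")
    case False
    have "card N \<ge> 1" using assms(1,5) by (metis card_0_eq empty_iff less_one not_le)
    hence "card N = 1" using False by simp
    hence Ni: "N - {i} = {}" using assms(1,5) by (metis card_1_singletonE Diff_cancel singletonD)
    show ?thesis
    proof (rule triple_good[OF assms(4) assms(5), of "\<lambda>_. undefined"])
      show "inj_on (\<lambda>_. undefined) (N - {i})" unfolding Ni by simp
      show "(\<lambda>_. undefined) ` (N - {i}) \<subseteq> M" unfolding Ni by simp
      show "M = M - (\<lambda>_. undefined) ` (N - {i})" unfolding Ni by simp
      show "card M = 3" using assms(3) \<open>card N = 1\<close> by simp
      show "\<forall>a\<in>N - {i}. \<forall>g\<in>M. v a (M - {g}) \<le> v a {undefined}" unfolding Ni by simp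
    qed
  next
    case True
    obtain \<rho> :: "'g \<Rightarrow> nat" where rho: "inj_on \<rho> M" "\<forall>g\<in>M. \<forall>h\<in>M. v i {g} < v i {h} \<longrightarrow> \<rho> g < \<rho> h"
      using rank_exists[OF assms(2), of "\<lambda>g. v i {g}"] by blast
    interpret S: setting N M v i \<rho>
      using assms True rho by unfold_locales auto
    obtain c0 x0 where "S.valid c0 x0" using S.exists_valid by blast
    hence "\<exists>p. S.valid (fst p) (snd p)" by auto
    then obtain p where p: "S.valid (fst p) (snd p)"
      and pmin: "\<forall>q. S.valid (fst q) (snd q) \<longrightarrow> S.meas (fst p) (snd p) \<le> S.meas (fst q) (snd q)"
      using ex_has_least_nat[of "\<lambda>p. S.valid (fst p) (snd p)" _ "\<lambda>p. S.meas (fst p) (snd p)"] by blast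
    have "\<forall>c' x'. S.valid c' x' \<longrightarrow> S.meas (fst p) (snd p) \<le> S.meas c' x'"
      using pmin by (metis fst_conv snd_conv)
    thus ?thesis using S.main[OF p] by blast
  qed
  thus ?thesis unfolding good_alloc_def by blast
qed



end
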